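(* Let $j\ge1$ be an integer, $s\in\mathbb{R}$ and $T>0$. Let $a_{l_1,l_2}\in\mathbb{C}$ for integers $0\le l_1\le l_2\le 2j$, and suppose there exists an integer $k>j$ with $a_{0,k}\neq0$. Then there does not exist any normed space $X_T$ of functions on $\mathbb{R}\times[-T,T]$ satisfying all three of the following: (i) $X_T$ is continuously embedded in $C([-T,T];H^s(\mathbb{R}))$, i.e. $\|u\|_{C([-T,T];H^s)}\lesssim\|u\|_{X_T}$ for all $u\in X_T$; (ii) $\|U_j(t)\phi\|_{X_T}\lesssim\|\phi\|_{H^s}$ for all $\phi\in H^s(\mathbb{R})$; (iii) for all $u,v\in X_T$, $$\Big\|\int_0^tU_j(t-t')\sum_{0\le l_1\le l_2\le2j}a_{l_1,l_2}\,\partial_x^{l_1}u(t')\,\partial_x^{l_2}v(t')\,dt'\Big\|_{X_T}\lesssim\|u\|_{X_T}\|v\|_{X_T}.$$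
   Context: $U_j(t)$ is the unitary group on $H^s(\mathbb{R})$ given by $\widehat{U_j(t)\phi}(\xi)=e^{(-1)^{j+1}i\xi^{2j+1}t}\widehat\phi(\xi)$ (the free evolution of $\partial_tu+\partial_x^{2j+1}u=0$). $H^s(\mathbb{R})$ is the Sobolev space with norm $\|(1+\xi^2)^{s/2}\widehat f\|_{L^2}$. The conclusion also holds if all functions are required to be real-valued. *)

theory Defs
  imports "HOL-Analysis.Analysis"
begin

text \<open>Everything is expressed on the Fourier side (in the space variable x):
  an element of H^s is represented by its Fourier transform g = phi-hat,
  with phi-hat(xi) = integral of phi(x) exp(-i x xi) dx.
  A function u(t,x) on [-T,T] x R is represented by w t xi = (u(t))-hat(xi).\<close>

definition in_Hs :: "real \<Rightarrow> (real \<Rightarrow> complex) \<Rightarrow> bool" where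
  "in_Hs s g \<longleftrightarrow> g \<in> borel_measurable lborel \<and>
     integrable lborel (\<lambda>\<xi>. (1 + \<xi>\<^sup>2) powr s * (cmod (g \<xi>))\<^sup>2)"

definition Hs_norm :: "real \<Rightarrow> (real \<Rightarrow> complex) \<Rightarrow> real" where
  "Hs_norm s g = sqrt (\<integral>\<xi>. (1 + \<xi>\<^sup>2) powr s * (cmod (g \<xi>))\<^sup>2 \<partial>lborel)"

text \<open>Fourier multiplier of U_j(t): exp((-1)^(j+1) i xi^(2j+1) t).\<close>
definition disp :: "nat \<Rightarrow> real \<Rightarrow> real \<Rightarrow> complex" where
  "disp j \<xi> t = exp (\<i> * complex_of_real ((-1) ^ (j + 1) * \<xi> ^ (2 * j + 1) * t))"

text \<open>(t,xi) |-> (U_j(t) phi)-hat(xi) on [-T,T] (extended by 0 outside).\<close>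
definition free_evol :: "nat \<Rightarrow> real \<Rightarrow> (real \<Rightarrow> complex) \<Rightarrow> real \<Rightarrow> real \<Rightarrow> complex" where
  "free_evol j T g = (\<lambda>t \<xi>. if t \<in> {-T..T} then disp j \<xi> t * g \<xi> else 0)"

text \<open>Fourier transform at time t of sum a_{l1,l2} d_x^l1 u d_x^l2 v,
  using (fg)-hat = (1/(2 pi)) f-hat * g-hat and (d_x^l f)-hat = (i xi)^l f-hat.\<close>
definition nonlin_hat :: "nat \<Rightarrow> (nat \<Rightarrow> nat \<Rightarrow> complex) \<Rightarrow> (real \<Rightarrow> real \<Rightarrow> complex)
    \<Rightarrow> (real \<Rightarrow> real \<Rightarrow> complex) \<Rightarrow> real \<Rightarrow> real \<Rightarrow> complex" where
  "nonlin_hat j a u v t \<xi> =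
     (\<Sum>l2\<in>{0..2*j}. \<Sum>l1\<in>{0..l2}. a l1 l2 * complex_of_real (1 / (2 * pi)) *
        (\<integral>\<eta>. (\<i> * complex_of_real \<eta>) ^ l1 * u t \<eta> *
               (\<i> * complex_of_real (\<xi> - \<eta>)) ^ l2 * v t (\<xi> - \<eta>) \<partial>lborel))"

text \<open>Fourier transform of the Duhamel term int_0^t U_j(t-t') F(t') dt' on [-T,T]
  (oriented integral: negative orientation for t < 0).\<close>
definition duhamel :: "nat \<Rightarrow> real \<Rightarrow> (nat \<Rightarrow> nat \<Rightarrow> complex) \<Rightarrow> (real \<Rightarrow> real \<Rightarrow> complex)
    \<Rightarrow> (real \<Rightarrow> real \<Rightarrow> complex) \<Rightarrow> real \<Rightarrow> real \<Rightarrow> complex" where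
  "duhamel j T a u v = (\<lambda>t \<xi>. if t \<in> {-T..T} then
      interval_lebesgue_integral lborel (ereal 0) (ereal t)
        (\<lambda>t'. disp j \<xi> (t - t') * nonlin_hat j a u v t' \<xi>)
    else 0)"

definition seminormed_fun_space :: "(real \<Rightarrow> real \<Rightarrow> complex) set \<Rightarrow> ((real \<Rightarrow> real \<Rightarrow> complex) \<Rightarrow> real) \<Rightarrow> bool" where
  "seminormed_fun_space X N \<longleftrightarrow>
     (\<lambda>t \<xi>. 0) \<in> X \<and>
     (\<forall>u\<in>X. \<forall>v\<in>X. (\<lambda>t \<xi>. u t \<xi> + v t \<xi>) \<in> X) \<and>
     (\<forall>c. \<forall>u\<in>X. (\<lambda>t \<xi>. c * u t \<xi>) \<in> X) \<and>
     (\<forall>u\<in>X. N u \<ge> 0) \<and>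
     (\<forall>c. \<forall>u\<in>X. N (\<lambda>t \<xi>. c * u t \<xi>) = cmod c * N u) \<and>
     (\<forall>u\<in>X. \<forall>v\<in>X. N (\<lambda>t \<xi>. u t \<xi> + v t \<xi>) \<le> N u + N v)"

definition in_C_Hs :: "real \<Rightarrow> real \<Rightarrow> (real \<Rightarrow> real \<Rightarrow> complex) \<Rightarrow> bool" where
  "in_C_Hs s T u \<longleftrightarrow> (\<forall>t\<in>{-T..T}. in_Hs s (u t)) \<and>
     (\<forall>t0\<in>{-T..T}. ((\<lambda>t. Hs_norm s (\<lambda>\<xi>. u t \<xi> - u t0 \<xi>)) \<longlongrightarrow> 0) (at t0 within {-T..T}))"

definition C_Hs_norm :: "real \<Rightarrow> real \<Rightarrow> (real \<Rightarrow> real \<Rightarrow> complex) \<Rightarrow> real" where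
  "C_Hs_norm s T u = (SUP t\<in>{-T..T}. Hs_norm s (u t))"

end

theory Submission
  imports Defs
begin


lemma cos_half: fixes \<theta> :: real assumes "\<bar>\<theta>\<bar> \<le> 1" shows "cos \<theta> \<ge> 1/2"
proof -
  have "cos \<theta> = cos \<bar>\<theta>\<bar>" by (cases "\<theta> \<ge> 0") auto
  moreover have "cos (pi/3) \<le> cos \<bar>\<theta>\<bar>"
    using assms pi_gt3 by (subst cos_mono_le_eq) auto
  ultimately show ?thesis by (simp add: cos_60)
qed

lemma pow_incr_bound:
  fixes z e :: real assumes "0 \<le> z" "0 \<le> e"
  shows "(z + e) ^ Suc m \<le> z ^ Suc m + real (Suc m) * e * (z + e) ^ m"
proof (induction m)
  case 0 then show ?case by simp
next
  case (Suc m)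
  have "(z + e) ^ Suc (Suc m) = (z + e) * (z + e) ^ Suc m" by simp
  also have "\<dots> \<le> (z + e) * (z ^ Suc m + real (Suc m) * e * (z + e) ^ m)"
    using Suc assms by (intro mult_left_mono) auto
  also have "\<dots> = z ^ Suc (Suc m) + e * z ^ Suc m + real (Suc m) * e * (z + e) ^ Suc m"
    by (simp add: algebra_simps)
  also have "e * z ^ Suc m \<le> e * (z + e) ^ Suc m"
    using assms by (intro mult_left_mono power_mono) auto
  finally show ?case by (simp add: algebra_simps)
qed

lemma weight_bounds:
  fixes N \<xi> s :: real assumes "0 \<le> N" "N \<le> \<xi>" "\<xi> \<le> N + 1"
  shows "(1 + \<xi>\<^sup>2) powr s \<le> (1 + N\<^sup>2) powr s * 4 powr \<bar>s\<bar>"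
    and "(1 + \<xi>\<^sup>2) powr s \<ge> (1 + N\<^sup>2) powr s * 4 powr (-\<bar>s\<bar>)"
proof -
  define r where "r = (1 + \<xi>\<^sup>2) / (1 + N\<^sup>2)"
  have pos: "1 + N\<^sup>2 > 0" by (simp add: add_pos_nonneg)
  have eq: "1 + \<xi>\<^sup>2 = (1 + N\<^sup>2) * r" using pos by (simp add: r_def)
  have "N\<^sup>2 \<le> \<xi>\<^sup>2" using assms by (intro power_mono) auto
  then have r1: "1 \<le> r" using pos by (simp add: r_def)
  have "\<xi>\<^sup>2 \<le> (N+1)\<^sup>2" using assms by (intro power_mono) auto
  also have "\<dots> \<le> 3 + 3 * N\<^sup>2"
  proof -
    have "0 \<le> (N - 1)\<^sup>2" by simp
    then have "0 \<le> N\<^sup>2 - 2*N + 1" by (simp add: power2_diff)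
    moreover have "(N+1)\<^sup>2 = N\<^sup>2 + 2*N + 1" by (simp add: power2_sum)
    ultimately show ?thesis using zero_le_power2[of N] by linarith
  qed
  finally have "1 + \<xi>\<^sup>2 \<le> 4 + 4 * N\<^sup>2" using zero_le_power2[of N] by linarith
  then have r4: "r \<le> 4" using pos by (simp add: r_def pos_divide_le_eq)
  have rp: "r powr s \<le> 4 powr \<bar>s\<bar> \<and> r powr s \<ge> 4 powr (-\<bar>s\<bar>)"
  proof (cases "s \<ge> 0")
    case True
    have "r powr s \<le> 4 powr s" using r1 r4 True by (intro powr_mono2) auto
    moreover have "1 \<le> r powr s" using r1 True by (simp add: ge_one_powr_ge_zero)
    moreover have "4 powr (-s) \<le> 1" using True by (simp add: powr_minus_divide ge_one_powr_ge_zero)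
    ultimately show ?thesis using True by auto
  next
    case False
    have "4 powr s \<le> r powr s" using r1 r4 False by (intro powr_mono2') auto
    moreover have "r powr s \<le> 1" using r1 False
      by (metis less_eq_real_def not_le powr_le_one_le powr_one_eq_one powr_less_mono2_neg zero_less_one)
    moreover have "1 \<le> 4 powr (-s)" using False by (simp add: ge_one_powr_ge_zero)
    ultimately show ?thesis using False by auto
  qed
  have "(1 + \<xi>\<^sup>2) powr s = (1 + N\<^sup>2) powr s * r powr s"
    using pos r1 by (simp add: eq powr_mult)
  moreover have "(1 + N\<^sup>2) powr s > 0" using pos by simp
  ultimately show "(1 + \<xi>\<^sup>2) powr s \<le> (1 + N\<^sup>2) powr s * 4 powr \<bar>s\<bar>"
    and "(1 + \<xi>\<^sup>2) powr s \<ge> (1 + N\<^sup>2) powr s * 4 powr (-\<bar>s\<bar>)"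
    using rp by (auto intro: mult_left_mono)
qed



lemma Hs_norm_nonneg: "Hs_norm s g \<ge> 0"
  unfolding Hs_norm_def by simp

lemma Hs_norm_sq: "(Hs_norm s g)\<^sup>2 = (\<integral>\<xi>. (1 + \<xi>\<^sup>2) powr s * (cmod (g \<xi>))\<^sup>2 \<partial>lborel)"
  unfolding Hs_norm_def by (subst real_sqrt_pow2) (auto intro!: integral_nonneg_AE)

lemma Hs_quasi:
  assumes f: "in_Hs s f" and g: "in_Hs s g"
  shows "Hs_norm s f \<le> sqrt (2 * (Hs_norm s (\<lambda>\<xi>. f \<xi> - g \<xi>))\<^sup>2 + 2 * (Hs_norm s g)\<^sup>2)"
proof -
  have [measurable]: "f \<in> borel_measurable lborel" "g \<in> borel_measurable lborel"
    using f g by (auto simp: in_Hs_def)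
  have ig: "integrable lborel (\<lambda>\<xi>. (1 + \<xi>\<^sup>2) powr s * (cmod (g \<xi>))\<^sup>2)"
   and if': "integrable lborel (\<lambda>\<xi>. (1 + \<xi>\<^sup>2) powr s * (cmod (f \<xi>))\<^sup>2)"
    using f g by (auto simp: in_Hs_def)
  have pw1: "(cmod (f \<xi> - g \<xi>))\<^sup>2 \<le> 2 * (cmod (f \<xi>))\<^sup>2 + 2 * (cmod (g \<xi>))\<^sup>2" for \<xi>
  proof -
    have "cmod (f \<xi> - g \<xi>) \<le> cmod (f \<xi>) + cmod (g \<xi>)" by (rule norm_triangle_ineq4)
    then have "(cmod (f \<xi> - g \<xi>))\<^sup>2 \<le> (cmod (f \<xi>) + cmod (g \<xi>))\<^sup>2" by (intro power_mono) auto
    also have "\<dots> \<le> 2 * (cmod (f \<xi>))\<^sup>2 + 2 * (cmod (g \<xi>))\<^sup>2"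
      using zero_le_power2[of "cmod (f \<xi>) - cmod (g \<xi>)"] by (simp add: power2_diff power2_sum)
    finally show ?thesis .
  qed
  have pw2: "(cmod (f \<xi>))\<^sup>2 \<le> 2 * (cmod (f \<xi> - g \<xi>))\<^sup>2 + 2 * (cmod (g \<xi>))\<^sup>2" for \<xi>
  proof -
    have "cmod (f \<xi>) \<le> cmod (f \<xi> - g \<xi>) + cmod (g \<xi>)" by (metis diff_add_cancel norm_triangle_ineq)
    then have "(cmod (f \<xi>))\<^sup>2 \<le> (cmod (f \<xi> - g \<xi>) + cmod (g \<xi>))\<^sup>2" by (intro power_mono) auto
    also have "\<dots> \<le> 2 * (cmod (f \<xi> - g \<xi>))\<^sup>2 + 2 * (cmod (g \<xi>))\<^sup>2"
      using zero_le_power2[of "cmod (f \<xi> - g \<xi>) - cmod (g \<xi>)"] by (simp add: power2_diff power2_sum)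
    finally show ?thesis .
  qed
  have wpos: "(1 + \<xi>\<^sup>2) powr s \<ge> 0" for \<xi> :: real by simp
  have ifg: "integrable lborel (\<lambda>\<xi>. (1 + \<xi>\<^sup>2) powr s * (cmod (f \<xi> - g \<xi>))\<^sup>2)"
  proof (rule Bochner_Integration.integrable_bound[where f="\<lambda>\<xi>. 2 * ((1 + \<xi>\<^sup>2) powr s * (cmod (f \<xi>))\<^sup>2) + 2 * ((1 + \<xi>\<^sup>2) powr s * (cmod (g \<xi>))\<^sup>2)"])
    show "integrable lborel (\<lambda>\<xi>. 2 * ((1 + \<xi>\<^sup>2) powr s * (cmod (f \<xi>))\<^sup>2) + 2 * ((1 + \<xi>\<^sup>2) powr s * (cmod (g \<xi>))\<^sup>2))"
      using ig if' by auto
    show "(\<lambda>\<xi>. (1 + \<xi>\<^sup>2) powr s * (cmod (f \<xi> - g \<xi>))\<^sup>2) \<in> borel_measurable lborel" by measurable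
    show "AE \<xi> in lborel. norm ((1 + \<xi>\<^sup>2) powr s * (cmod (f \<xi> - g \<xi>))\<^sup>2) \<le> norm (2 * ((1 + \<xi>\<^sup>2) powr s * (cmod (f \<xi>))\<^sup>2) + 2 * ((1 + \<xi>\<^sup>2) powr s * (cmod (g \<xi>))\<^sup>2))"
    proof (rule AE_I2)
      fix \<xi> :: real
      have "(1 + \<xi>\<^sup>2) powr s * (cmod (f \<xi> - g \<xi>))\<^sup>2 \<le> (1 + \<xi>\<^sup>2) powr s * (2 * (cmod (f \<xi>))\<^sup>2 + 2 * (cmod (g \<xi>))\<^sup>2)"
        using pw1 wpos by (intro mult_left_mono) auto
      then show "norm ((1 + \<xi>\<^sup>2) powr s * (cmod (f \<xi> - g \<xi>))\<^sup>2) \<le> norm (2 * ((1 + \<xi>\<^sup>2) powr s * (cmod (f \<xi>))\<^sup>2) + 2 * ((1 + \<xi>\<^sup>2) powr s * (cmod (g \<xi>))\<^sup>2))"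
        by (simp add: algebra_simps)
    qed
  qed
  have "(Hs_norm s f)\<^sup>2 \<le> (\<integral>\<xi>. 2 * ((1 + \<xi>\<^sup>2) powr s * (cmod (f \<xi> - g \<xi>))\<^sup>2) + 2 * ((1 + \<xi>\<^sup>2) powr s * (cmod (g \<xi>))\<^sup>2) \<partial>lborel)"
    unfolding Hs_norm_sq
  proof (rule integral_mono)
    show "integrable lborel (\<lambda>\<xi>. 2 * ((1 + \<xi>\<^sup>2) powr s * (cmod (f \<xi> - g \<xi>))\<^sup>2) + 2 * ((1 + \<xi>\<^sup>2) powr s * (cmod (g \<xi>))\<^sup>2))"
      using ifg ig by auto
    fix \<xi> :: real
    have "(1 + \<xi>\<^sup>2) powr s * (cmod (f \<xi>))\<^sup>2 \<le> (1 + \<xi>\<^sup>2) powr s * (2 * (cmod (f \<xi> - g \<xi>))\<^sup>2 + 2 * (cmod (g \<xi>))\<^sup>2)"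
      using pw2 wpos by (intro mult_left_mono) auto
    then show "(1 + \<xi>\<^sup>2) powr s * (cmod (f \<xi>))\<^sup>2 \<le> 2 * ((1 + \<xi>\<^sup>2) powr s * (cmod (f \<xi> - g \<xi>))\<^sup>2) + 2 * ((1 + \<xi>\<^sup>2) powr s * (cmod (g \<xi>))\<^sup>2)"
      by (simp add: algebra_simps)
  qed (use if' in auto)
  also have "\<dots> = 2 * (Hs_norm s (\<lambda>\<xi>. f \<xi> - g \<xi>))\<^sup>2 + 2 * (Hs_norm s g)\<^sup>2"
    unfolding Hs_norm_sq using ifg ig by simp
  finally show ?thesis using Hs_norm_nonneg by (simp add: real_le_rsqrt)
qed

lemma C_Hs_lower:
  assumes "T > 0" "in_C_Hs s T u" "t \<in> {-T..T}"
  shows "Hs_norm s (u t) \<le> C_Hs_norm s T u"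
proof -
  let ?S = "{-T..T}"
  have inH: "\<forall>t\<in>?S. in_Hs s (u t)" and cont: "\<forall>t0\<in>?S. ((\<lambda>t. Hs_norm s (\<lambda>\<xi>. u t \<xi> - u t0 \<xi>)) \<longlongrightarrow> 0) (at t0 within ?S)"
    using assms(2) by (auto simp: in_C_Hs_def)
  have loc: "\<exists>d>0. \<forall>t\<in>?S. dist t t0 < d \<longrightarrow> Hs_norm s (u t) \<le> sqrt (2 + 2 * (Hs_norm s (u t0))\<^sup>2)"
    if t0: "t0 \<in> ?S" for t0
  proof -
    have "\<forall>e>0. eventually (\<lambda>t. dist (Hs_norm s (\<lambda>\<xi>. u t \<xi> - u t0 \<xi>)) 0 < e) (at t0 within ?S)"
    proof -
      have "((\<lambda>t. Hs_norm s (\<lambda>\<xi>. u t \<xi> - u t0 \<xi>)) \<longlongrightarrow> 0) (at t0 within ?S)"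
        using cont t0 by blast
      then show ?thesis unfolding tendsto_iff .
    qed
    then have "eventually (\<lambda>t. dist (Hs_norm s (\<lambda>\<xi>. u t \<xi> - u t0 \<xi>)) 0 < 1) (at t0 within ?S)"
      by simp
    then obtain d where d: "d > 0" and hd: "\<forall>t\<in>?S. t \<noteq> t0 \<and> dist t t0 < d \<longrightarrow> dist (Hs_norm s (\<lambda>\<xi>. u t \<xi> - u t0 \<xi>)) 0 < 1"
      unfolding eventually_at by blast
    show ?thesis
    proof (intro exI[of _ d] conjI ballI impI d)
      fix t assume t: "t \<in> ?S" "dist t t0 < d"
      show "Hs_norm s (u t) \<le> sqrt (2 + 2 * (Hs_norm s (u t0))\<^sup>2)"
      proof (cases "t = t0")
        case True
        have "Hs_norm s (u t0) \<le> sqrt (2 * (Hs_norm s (u t0))\<^sup>2)"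
          using Hs_norm_nonneg[of s "u t0"] by (simp add: real_le_rsqrt)
        also have "\<dots> \<le> sqrt (2 + 2 * (Hs_norm s (u t0))\<^sup>2)" by simp
        finally show ?thesis using True by simp
      next
        case False
        then have "Hs_norm s (\<lambda>\<xi>. u t \<xi> - u t0 \<xi>) < 1" using hd t by auto
        then have "(Hs_norm s (\<lambda>\<xi>. u t \<xi> - u t0 \<xi>))\<^sup>2 \<le> 1"
          using Hs_norm_nonneg by (simp add: power_le_one)
        then have "sqrt (2 * (Hs_norm s (\<lambda>\<xi>. u t \<xi> - u t0 \<xi>))\<^sup>2 + 2 * (Hs_norm s (u t0))\<^sup>2) \<le> sqrt (2 + 2 * (Hs_norm s (u t0))\<^sup>2)"
          by simp
        moreover have "Hs_norm s (u t) \<le> sqrt (2 * (Hs_norm s (\<lambda>\<xi>. u t \<xi> - u t0 \<xi>))\<^sup>2 + 2 * (Hs_norm s (u t0))\<^sup>2)"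
          using Hs_quasi inH t t0 by blast
        ultimately show ?thesis by linarith
      qed
    qed
  qed
  then have "\<forall>t0\<in>?S. \<exists>d. d > 0 \<and> (\<forall>t\<in>?S. dist t t0 < d \<longrightarrow> Hs_norm s (u t) \<le> sqrt (2 + 2 * (Hs_norm s (u t0))\<^sup>2))"
    by blast
  from bchoice[OF this] obtain d where d0: "\<forall>t0\<in>?S. d t0 > 0 \<and> (\<forall>t\<in>?S. dist t t0 < d t0 \<longrightarrow> Hs_norm s (u t) \<le> sqrt (2 + 2 * (Hs_norm s (u t0))\<^sup>2))"
    by blast
  then have d: "\<And>t0. t0 \<in> ?S \<Longrightarrow> d t0 > 0 \<and> (\<forall>t\<in>?S. dist t t0 < d t0 \<longrightarrow> Hs_norm s (u t) \<le> sqrt (2 + 2 * (Hs_norm s (u t0))\<^sup>2))"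
    by blast
  have cS: "compact ?S" by simp
  have cov: "?S \<subseteq> (\<Union>c\<in>?S. ball c (d c))"
  proof
    fix t assume t: "t \<in> ?S"
    then have "t \<in> ball t (d t)" using d[of t] by simp
    then show "t \<in> (\<Union>c\<in>?S. ball c (d c))" using t by blast
  qed
  obtain S' where S': "S' \<subseteq> ?S" "finite S'" "?S \<subseteq> (\<Union>c\<in>S'. ball c (d c))"
    using compactE_image[OF cS _ cov] by (metis open_ball)
  define B where "B = Max ((\<lambda>c. sqrt (2 + 2 * (Hs_norm s (u c))\<^sup>2)) ` S')"
  have bd: "Hs_norm s (u t) \<le> B" if t: "t \<in> ?S" for t
  proof -
    from S'(3) t obtain c where c: "c \<in> S'" "t \<in> ball c (d c)" by auto
    then have "Hs_norm s (u t) \<le> sqrt (2 + 2 * (Hs_norm s (u c))\<^sup>2)"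
      using d[of c] S'(1) t by (simp add: dist_commute subset_iff)
    also have "\<dots> \<le> B" unfolding B_def using c S'(2) by (intro Max_ge) auto
    finally show ?thesis .
  qed
  have "bdd_above ((\<lambda>t. Hs_norm s (u t)) ` ?S)" using bd by (intro bdd_aboveI2[where M=B]) blast
  then show ?thesis unfolding C_Hs_norm_def using assms(3) by (intro cSUP_upper) auto
qed



definition Pm :: "(nat \<Rightarrow> nat \<Rightarrow> complex) \<Rightarrow> nat \<Rightarrow> real \<Rightarrow> real \<Rightarrow> complex" where
  "Pm a j \<eta> \<zeta> = (\<Sum>l2\<in>{0..2*j}. \<Sum>l1\<in>{0..l2}. a l1 l2 * (\<i> * complex_of_real \<eta>) ^ l1 * (\<i> * complex_of_real \<zeta>) ^ l2)"

definition Asum :: "(nat \<Rightarrow> nat \<Rightarrow> complex) \<Rightarrow> nat \<Rightarrow> real" where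
  "Asum a j = (\<Sum>l2\<in>{0..2*j}. \<Sum>l1\<in>{0..l2}. cmod (a l1 l2))"

lemma Asum_nonneg: "Asum a j \<ge> 0"
  unfolding Asum_def by (intro sum_nonneg) auto

lemma P_remainder:
  assumes K: "K \<le> 2*j" "1 \<le> K" and amax: "\<forall>l2. K < l2 \<and> l2 \<le> 2*j \<longrightarrow> a 0 l2 = 0"
    and eta: "0 \<le> \<eta>" "\<eta> \<le> 1" and zeta: "1 \<le> \<zeta>" and small: "\<eta> * \<zeta> ^ (2*j) \<le> 1"
  shows "cmod (Pm a j \<eta> \<zeta> - a 0 K * (\<i> * complex_of_real \<zeta>) ^ K) \<le> Asum a j * \<zeta> ^ (K - 1)"
proof -
  define tm where "tm l1 l2 = a l1 l2 * (\<i> * complex_of_real \<eta>) ^ l1 * (\<i> * complex_of_real \<zeta>) ^ l2" for l1 l2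
  have main: "(\<Sum>l2\<in>{0..2*j}. \<Sum>l1\<in>{0..l2}. (if l1 = 0 \<and> l2 = K then tm l1 l2 else 0)) = a 0 K * (\<i> * complex_of_real \<zeta>) ^ K"
  proof -
    have "(\<Sum>l2\<in>{0..2*j}. \<Sum>l1\<in>{0..l2}. (if l1 = 0 \<and> l2 = K then tm l1 l2 else 0))
        = (\<Sum>l2\<in>{0..2*j}. (if l2 = K then tm 0 l2 else 0))"
      by (intro sum.cong refl) (auto simp: sum.delta)
    also have "\<dots> = tm 0 K" using K by (simp add: sum.delta)
    finally show ?thesis by (simp add: tm_def)
  qed
  have split: "Pm a j \<eta> \<zeta> = (\<Sum>l2\<in>{0..2*j}. \<Sum>l1\<in>{0..l2}. (if l1 = 0 \<and> l2 = K then tm l1 l2 else 0))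
      + (\<Sum>l2\<in>{0..2*j}. \<Sum>l1\<in>{0..l2}. (if l1 = 0 \<and> l2 = K then 0 else tm l1 l2))"
    unfolding Pm_def tm_def[symmetric] sum.distrib[symmetric] by (intro sum.cong refl) auto
  have bound: "cmod (if l1 = 0 \<and> l2 = K then 0 else tm l1 l2) \<le> cmod (a l1 l2) * \<zeta> ^ (K - 1)"
    if l: "l2 \<le> 2*j" "l1 \<le> l2" for l1 l2
  proof (cases "l1 = 0 \<and> l2 = K")
    case True then show ?thesis using zeta by simp
  next
    case False
    have ntm: "cmod (tm l1 l2) = cmod (a l1 l2) * (\<eta> ^ l1 * \<zeta> ^ l2)"
      using eta zeta by (simp add: tm_def norm_mult norm_power)
    have z1: "1 \<le> \<zeta> ^ (K - 1)" using zeta by simp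
    show ?thesis
    proof (cases "l1 = 0")
      case True
      with False have "l2 \<noteq> K" by simp
      show ?thesis
      proof (cases "K < l2")
        case True
        then have "a 0 l2 = 0" using amax l by auto
        then show ?thesis using \<open>l1 = 0\<close> by (simp add: tm_def)
      next
        case False
        then have "l2 \<le> K - 1" using \<open>l2 \<noteq> K\<close> by simp
        then have "\<zeta> ^ l2 \<le> \<zeta> ^ (K - 1)" using zeta by (intro power_increasing) auto
        then show ?thesis using ntm \<open>l1 = 0\<close> \<open>l2 \<noteq> K\<close> by (simp add: mult_left_mono)
      qed
    next
      case False
      then have "\<eta> ^ l1 \<le> \<eta> ^ 1" using eta by (intro power_decreasing) auto
      moreover have "\<zeta> ^ l2 \<le> \<zeta> ^ (2*j)" using zeta l by (intro power_increasing) auto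
      ultimately have "\<eta> ^ l1 * \<zeta> ^ l2 \<le> \<eta> * \<zeta> ^ (2*j)"
        using eta zeta by (intro mult_mono) auto
      then have "\<eta> ^ l1 * \<zeta> ^ l2 \<le> \<zeta> ^ (K - 1)" using small z1 by linarith
      then show ?thesis using ntm \<open>l1 \<noteq> 0\<close> by (simp add: mult_left_mono)
    qed
  qed
  have "cmod (Pm a j \<eta> \<zeta> - a 0 K * (\<i> * complex_of_real \<zeta>) ^ K)
      = cmod (\<Sum>l2\<in>{0..2*j}. \<Sum>l1\<in>{0..l2}. (if l1 = 0 \<and> l2 = K then 0 else tm l1 l2))"
    using split main by simp
  also have "\<dots> \<le> (\<Sum>l2\<in>{0..2*j}. cmod (\<Sum>l1\<in>{0..l2}. (if l1 = 0 \<and> l2 = K then 0 else tm l1 l2)))"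
    by (rule norm_sum)
  also have "\<dots> \<le> (\<Sum>l2\<in>{0..2*j}. \<Sum>l1\<in>{0..l2}. cmod (if l1 = 0 \<and> l2 = K then 0 else tm l1 l2))"
    by (intro sum_mono norm_sum)
  also have "\<dots> \<le> (\<Sum>l2\<in>{0..2*j}. \<Sum>l1\<in>{0..l2}. cmod (a l1 l2) * \<zeta> ^ (K - 1))"
    by (intro sum_mono bound) auto
  also have "\<dots> = Asum a j * \<zeta> ^ (K - 1)"
    unfolding Asum_def by (simp add: sum_distrib_right)
  finally show ?thesis .
qed

lemma P_lower:
  assumes K: "K \<le> 2*j" "1 \<le> K" and amax: "\<forall>l2. K < l2 \<and> l2 \<le> 2*j \<longrightarrow> a 0 l2 = 0"
    and aK: "a 0 K \<noteq> 0"
    and eta: "0 \<le> \<eta>" "\<eta> \<le> 1" and zeta: "N \<le> \<zeta>" and N1: "1 \<le> N" and small: "\<eta> * \<zeta> ^ (2*j) \<le> 1"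
    and NA: "4 * Asum a j \<le> cmod (a 0 K) * N"
    and th: "\<bar>\<theta>\<bar> \<le> 1"
  shows "Re (cnj (a 0 K * \<i> ^ K) / cmod (a 0 K) * exp (\<i> * complex_of_real \<theta>) * Pm a j \<eta> \<zeta>) \<ge> cmod (a 0 K) * N ^ K / 4"
proof -
  define \<omega> where "\<omega> = cnj (a 0 K * \<i> ^ K) / cmod (a 0 K)"
  define M where "M = a 0 K * (\<i> * complex_of_real \<zeta>) ^ K"
  define R where "R = Pm a j \<eta> \<zeta> - M"
  have z1: "1 \<le> \<zeta>" using zeta N1 by simp
  have Rb: "cmod R \<le> Asum a j * \<zeta> ^ (K - 1)"
    unfolding R_def M_def using P_remainder[of K j a \<eta> \<zeta>] K amax eta z1 small by blast
  have nw: "cmod \<omega> = 1" using aK by (simp add: \<omega>_def norm_mult norm_divide norm_power)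
  have wM: "\<omega> * M = complex_of_real (cmod (a 0 K) * \<zeta> ^ K)"
  proof -
    have "\<omega> * M = (cnj (a 0 K * \<i> ^ K) * (a 0 K * \<i> ^ K)) / cmod (a 0 K) * complex_of_real (\<zeta> ^ K)"
      by (simp add: \<omega>_def M_def power_mult_distrib)
    also have "cnj (a 0 K * \<i> ^ K) * (a 0 K * \<i> ^ K) = complex_of_real ((cmod (a 0 K))\<^sup>2)"
    proof -
      have "cnj (a 0 K * \<i> ^ K) * (a 0 K * \<i> ^ K) = complex_of_real ((cmod (a 0 K * \<i> ^ K))\<^sup>2)"
        by (simp only: complex_norm_square mult.commute)
      then show ?thesis by (simp add: norm_mult norm_power)
    qed
    finally show ?thesis using aK by (simp add: power2_eq_square)
  qed
  have ReM: "Re (\<omega> * exp (\<i> * complex_of_real \<theta>) * M) = cmod (a 0 K) * \<zeta> ^ K * cos \<theta>"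
  proof -
    have "\<omega> * exp (\<i> * complex_of_real \<theta>) * M = (\<omega> * M) * exp (\<i> * complex_of_real \<theta>)"
      by (simp only: ac_simps)
    also have "\<dots> = complex_of_real (cmod (a 0 K) * \<zeta> ^ K) * exp (\<i> * complex_of_real \<theta>)"
      by (simp only: wM)
    finally have eq: "\<omega> * exp (\<i> * complex_of_real \<theta>) * M = complex_of_real (cmod (a 0 K) * \<zeta> ^ K) * exp (\<i> * complex_of_real \<theta>)" .
    show ?thesis by (subst eq) (simp add: Re_exp del: of_real_mult)
  qed
  have ReR: "Re (\<omega> * exp (\<i> * complex_of_real \<theta>) * R) \<ge> - (Asum a j * \<zeta> ^ (K - 1))"
  proof -
    have "\<bar>Re (\<omega> * exp (\<i> * complex_of_real \<theta>) * R)\<bar> \<le> cmod (\<omega> * exp (\<i> * complex_of_real \<theta>) * R)"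
      by (rule abs_Re_le_cmod)
    also have "\<dots> = cmod R" using nw by (simp add: norm_mult)
    finally show ?thesis using Rb by linarith
  qed
  have cth: "cos \<theta> \<ge> 1/2" using cos_half th by blast
  have an: "cmod (a 0 K) > 0" using aK by simp
  define q where "q = \<zeta> ^ (K - 1)"
  have zK: "\<zeta> ^ K = \<zeta> * q" using K by (simp add: q_def power_Suc[symmetric] del: power_Suc)
  have qN: "N ^ (K - 1) \<le> q" unfolding q_def using zeta N1 by (intro power_mono) auto
  have q0: "q \<ge> 0" using qN N1 by (smt (verit) zero_le_power)
  have "Re (\<omega> * exp (\<i> * complex_of_real \<theta>) * Pm a j \<eta> \<zeta>)
      = Re (\<omega> * exp (\<i> * complex_of_real \<theta>) * M) + Re (\<omega> * exp (\<i> * complex_of_real \<theta>) * R)"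
    by (simp add: R_def algebra_simps)
  also have "\<dots> \<ge> cmod (a 0 K) * \<zeta> ^ K * (1/2) - Asum a j * q"
    using ReM ReR cth an z1 unfolding q_def
    by (smt (verit, best) mult_left_mono mult_nonneg_nonneg zero_le_power)
  finally have L: "Re (\<omega> * exp (\<i> * complex_of_real \<theta>) * Pm a j \<eta> \<zeta>) \<ge> cmod (a 0 K) * \<zeta> ^ K * (1/2) - Asum a j * q" .
  have "cmod (a 0 K) * N ^ K / 4 = cmod (a 0 K) * N * N ^ (K - 1) / 4"
    using K by (simp add: power_Suc[symmetric] del: power_Suc)
  also have "\<dots> \<le> cmod (a 0 K) * \<zeta> * q / 4"
    using qN zeta an N1 by (intro divide_right_mono mult_mono) auto
  also have "\<dots> \<le> cmod (a 0 K) * \<zeta> ^ K * (1/2) - Asum a j * q"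
  proof -
    have "4 * Asum a j \<le> cmod (a 0 K) * \<zeta>" using NA zeta an by (smt (verit) mult_left_mono)
    then have "4 * Asum a j * q \<le> cmod (a 0 K) * \<zeta> * q" using q0 by (intro mult_right_mono)
    then show ?thesis unfolding zK by (simp add: algebra_simps)
  qed
  finally show ?thesis using L unfolding \<omega>_def by linarith
qed



definition gL :: "real \<Rightarrow> real \<Rightarrow> complex" where "gL d \<eta> = complex_of_real (indicator {0..d} \<eta>)"
definition gH :: "real \<Rightarrow> real \<Rightarrow> complex" where "gH N \<eta> = complex_of_real (indicator {N..N+1} \<eta>)"

lemma disp_exp: "disp j x t = exp (\<i> * complex_of_real ((-1) ^ (j + 1) * x ^ (2 * j + 1) * t))"
  by (simp add: disp_def)

lemma expi_mult: "exp (\<i> * complex_of_real x) * exp (\<i> * complex_of_real y) = exp (\<i> * complex_of_real (x + y))"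
  by (simp add: exp_add[symmetric] distrib_left)

lemma expi_cnj: "cnj (exp (\<i> * complex_of_real x)) = exp (\<i> * complex_of_real (- x))"
  by (simp add: exp_cnj)

lemma integral_ind_const: "(a::real) \<le> b \<Longrightarrow> (\<integral>x. indicator {a..b} x * c \<partial>lborel) = (b - a) * c"
  by simp

lemma integrable_ind_const: "integrable lborel (\<lambda>x. indicator {a::real..b} x * (c::real))"
  using emeasure_compact_finite[OF compact_Icc[of a b]] by (intro integrable_mult_left integrable_real_indicator) auto

lemma ind_Hs:
  fixes p q s :: real
  assumes pq: "0 \<le> p" "p \<le> q" "q \<le> p + 1"
  shows "in_Hs s (\<lambda>\<eta>. complex_of_real (indicator {p..q} \<eta>))"
    and "(Hs_norm s (\<lambda>\<eta>. complex_of_real (indicator {p..q} \<eta>)))\<^sup>2 \<le> (q - p) * ((1 + p\<^sup>2) powr s * 4 powr \<bar>s\<bar>)"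
proof -
  have eq: "(\<lambda>\<xi>. (1 + \<xi>\<^sup>2) powr s * (cmod (complex_of_real (indicator {p..q} \<xi>)))\<^sup>2)
      = (\<lambda>\<xi>. indicator {p..q} \<xi> *\<^sub>R (1 + \<xi>\<^sup>2) powr s)"
    by (rule ext) (simp add: indicator_def)
  have cont: "continuous_on {p..q} (\<lambda>\<xi>::real. (1 + \<xi>\<^sup>2) powr s)"
    by (intro continuous_intros) (auto, metis add_pos_nonneg less_irrefl zero_le_power2 zero_less_one)
  have int: "integrable lborel (\<lambda>\<xi>. indicator {p..q} \<xi> *\<^sub>R (1 + \<xi>\<^sup>2) powr s)"
    by (rule borel_integrable_compact[OF compact_Icc cont])
  show "in_Hs s (\<lambda>\<eta>. complex_of_real (indicator {p..q} \<eta>))"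
    unfolding in_Hs_def eq using int by simp
  have "(Hs_norm s (\<lambda>\<eta>. complex_of_real (indicator {p..q} \<eta>)))\<^sup>2 = (\<integral>\<xi>. indicator {p..q} \<xi> *\<^sub>R (1 + \<xi>\<^sup>2) powr s \<partial>lborel)"
    unfolding Hs_norm_sq eq ..
  also have "\<dots> \<le> (\<integral>\<xi>. indicator {p..q} \<xi> * ((1 + p\<^sup>2) powr s * 4 powr \<bar>s\<bar>) \<partial>lborel)"
  proof (rule integral_mono[OF int])
    show "integrable lborel (\<lambda>\<xi>. indicator {p..q} \<xi> * ((1 + p\<^sup>2) powr s * 4 powr \<bar>s\<bar>))"
      using emeasure_compact_finite[OF compact_Icc[of p q]] by (intro integrable_mult_left integrable_real_indicator) auto
    fix \<xi> :: real
    show "indicator {p..q} \<xi> *\<^sub>R (1 + \<xi>\<^sup>2) powr s \<le> indicator {p..q} \<xi> * ((1 + p\<^sup>2) powr s * 4 powr \<bar>s\<bar>)"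
    proof (cases "\<xi> \<in> {p..q}")
      case True
      then show ?thesis using weight_bounds(1)[of p \<xi> s] pq by simp
    qed simp
  qed
  also have "\<dots> = (q - p) * ((1 + p\<^sup>2) powr s * 4 powr \<bar>s\<bar>)"
    using pq emeasure_compact_finite[OF compact_Icc[of p q]] by simp
  finally show "(Hs_norm s (\<lambda>\<eta>. complex_of_real (indicator {p..q} \<eta>)))\<^sup>2 \<le> (q - p) * ((1 + p\<^sup>2) powr s * 4 powr \<bar>s\<bar>)" .
qed

context
  fixes j :: nat and T :: real and a :: "nat \<Rightarrow> nat \<Rightarrow> complex" and K :: nat and N \<delta> :: real
  assumes j1: "1 \<le> j" and T0: "0 < T" and KJ: "j < K" "K \<le> 2*j" and aK: "a 0 K \<noteq> 0"
   and amax: "\<forall>l2. K < l2 \<and> l2 \<le> 2*j \<longrightarrow> a 0 l2 = 0"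
   and N1: "1 \<le> N" and NA: "4 * Asum a j \<le> cmod (a 0 K) * N"
   and d0: "0 < \<delta>" and d1: "\<delta> * (N+1)^(2*j) \<le> 1" and dT: "T * (2*j+2) * \<delta> * (N+1)^(2*j) \<le> 1"
begin

lemma d_le: "\<delta> \<le> 1/4"
proof -
  have "(2::real)^2 \<le> 2 ^ (2*j)" using j1 by (intro power_increasing) auto
  also have "(2::real) ^ (2*j) \<le> (N+1)^(2*j)" using N1 by (intro power_mono) auto
  finally have "4 \<le> (N+1)^(2*j)" by simp
  then have "\<delta> * 4 \<le> \<delta> * (N+1)^(2*j)" using d0 by (intro mult_left_mono) auto
  then show ?thesis using d1 by simp
qed

lemma phase:
  assumes t: "t' \<in> {0..T}" and eta: "\<eta> \<in> {0..\<delta>}" and xi: "\<xi> \<in> {N+\<delta>..N+1}"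
  shows "\<exists>\<theta>. \<bar>\<theta>\<bar> \<le> 1 \<and> cnj (disp j \<xi> T) * disp j \<xi> (T - t') * disp j \<eta> t' * disp j (\<xi> - \<eta>) t' = exp (\<i> * complex_of_real \<theta>)"
proof -
  define c :: real where "c = (-1) ^ (j + 1)"
  define m where "m = 2 * j + 1"
  define \<zeta> where "\<zeta> = \<xi> - \<eta>"
  define \<theta> where "\<theta> = c * t' * (\<eta> ^ m + \<zeta> ^ m - \<xi> ^ m)"
  have eq: "cnj (disp j \<xi> T) * disp j \<xi> (T - t') * disp j \<eta> t' * disp j (\<xi> - \<eta>) t' = exp (\<i> * complex_of_real \<theta>)"
  proof -
    have "cnj (disp j \<xi> T) * disp j \<xi> (T - t') * disp j \<eta> t' * disp j (\<xi> - \<eta>) t'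
       = exp (\<i> * complex_of_real (- (c * \<xi> ^ m * T) + c * \<xi> ^ m * (T - t') + c * \<eta> ^ m * t' + c * (\<xi> - \<eta>) ^ m * t'))"
      unfolding disp_def c_def[symmetric] m_def[symmetric] by (simp only: expi_cnj expi_mult)
    also have "- (c * \<xi> ^ m * T) + c * \<xi> ^ m * (T - t') + c * \<eta> ^ m * t' + c * (\<xi> - \<eta>) ^ m * t' = \<theta>"
      by (simp add: \<theta>_def \<zeta>_def algebra_simps)
    finally show ?thesis .
  qed
  have e0: "0 \<le> \<eta>" "\<eta> \<le> \<delta>" using eta by auto
  have dle: "\<delta> \<le> 1" using d_le by simp
  have z0: "N \<le> \<zeta>" "\<zeta> \<le> N + 1" using xi eta by (auto simp: \<zeta>_def)
  have x0: "0 \<le> \<xi>" "\<xi> \<le> N + 1" using xi N1 d0 by auto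
  have xz: "\<xi> = \<zeta> + \<eta>" by (simp add: \<zeta>_def)
  have up: "\<xi> ^ m \<le> \<zeta> ^ m + real m * \<eta> * \<xi> ^ (2*j)"
    using pow_incr_bound[of \<zeta> \<eta> "2*j"] z0 e0 N1 unfolding xz m_def by auto
  have lo: "\<zeta> ^ m \<le> \<xi> ^ m" unfolding xz using z0 e0 N1 by (intro power_mono) auto
  have em: "\<eta> ^ m \<le> \<delta>"
  proof -
    have "\<eta> ^ m \<le> \<eta> ^ 1" using e0 dle unfolding m_def by (intro power_decreasing) auto
    then show ?thesis using e0 by simp
  qed
  have Np: "1 \<le> (N+1)^(2*j)" using N1 by simp
  have xb: "\<xi> ^ (2*j) \<le> (N+1)^(2*j)" using x0 by (intro power_mono) auto
  have "real m * \<eta> * \<xi> ^ (2*j) \<le> real m * \<delta> * (N+1)^(2*j)"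
    using e0 xb x0 by (intro mult_mono) auto
  have E: "\<bar>\<eta> ^ m + \<zeta> ^ m - \<xi> ^ m\<bar> \<le> real (2*j+2) * \<delta> * (N+1)^(2*j)"
  proof -
    have a1: "real m * \<eta> * \<xi> ^ (2*j) \<le> real m * \<delta> * (N+1)^(2*j)"
      using e0 xb x0 by (intro mult_mono) auto
    have a2: "\<delta> \<le> \<delta> * (N+1)^(2*j)" using Np d0 by simp
    have a3: "0 \<le> \<eta> ^ m" using e0 by simp
    have "real (2*j+2) * \<delta> * (N+1)^(2*j) = real m * \<delta> * (N+1)^(2*j) + \<delta> * (N+1)^(2*j)"
      by (simp add: m_def algebra_simps)
    then show ?thesis using up lo em a1 a2 a3 by (simp add: abs_le_iff)
  qed
  have "\<bar>\<theta>\<bar> = \<bar>t'\<bar> * \<bar>\<eta> ^ m + \<zeta> ^ m - \<xi> ^ m\<bar>"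
    by (simp add: \<theta>_def c_def abs_mult power_abs)
  also have "\<dots> \<le> T * (real (2*j+2) * \<delta> * (N+1)^(2*j))"
    using t E by (intro mult_mono) auto
  also have "\<dots> \<le> 1" using dT by (simp add: algebra_simps)
  finally show ?thesis using eq by blast
qed

definition stuff :: "real \<Rightarrow> real \<Rightarrow> real \<Rightarrow> complex" where
  "stuff t' \<xi> \<eta> = complex_of_real (1 / (2 * pi)) * disp j \<xi> (T - t') * disp j \<eta> t' * disp j (\<xi> - \<eta>) t' * Pm a j \<eta> (\<xi> - \<eta>)"

lemma f_formula:
  assumes t: "t' \<in> {0..T}" and xi: "\<xi> \<in> {N+\<delta>..N+1}"
  shows "disp j \<xi> (T - t') * nonlin_hat j a (free_evol j T (gL \<delta>)) (free_evol j T (gH N)) t' \<xi>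
       = (\<integral>\<eta>. indicator {0..\<delta>} \<eta> *\<^sub>R stuff t' \<xi> \<eta> \<partial>lborel)"
proof -
  define X where "X l1 l2 \<eta> = (\<i> * complex_of_real \<eta>) ^ l1 * disp j \<eta> t' * (\<i> * complex_of_real (\<xi> - \<eta>)) ^ l2 * disp j (\<xi> - \<eta>) t'" for l1 l2 \<eta>
  define c where "c = complex_of_real (1 / (2 * pi))"
  have tT: "t' \<in> {-T..T}" using t T0 by auto
  have h_eq: "(\<i> * complex_of_real \<eta>) ^ l1 * free_evol j T (gL \<delta>) t' \<eta> * (\<i> * complex_of_real (\<xi> - \<eta>)) ^ l2 * free_evol j T (gH N) t' (\<xi> - \<eta>)
      = indicator {0..\<delta>} \<eta> *\<^sub>R X l1 l2 \<eta>" for l1 l2 \<eta>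
  proof (cases "\<eta> \<in> {0..\<delta>}")
    case True
    then have "\<xi> - \<eta> \<in> {N..N+1}" using xi by auto
    then show ?thesis using True tT by (simp add: free_evol_def gL_def gH_def X_def)
  next
    case False
    then show ?thesis using tT by (simp add: free_evol_def gL_def X_def)
  qed
  have cont: "continuous_on {0..\<delta>} (X l1 l2)" for l1 l2
    unfolding X_def disp_def by (intro continuous_intros)
  have int: "integrable lborel (\<lambda>\<eta>. indicator {0..\<delta>} \<eta> *\<^sub>R X l1 l2 \<eta>)" for l1 l2
    by (rule borel_integrable_compact[OF compact_Icc cont])
  have int2: "integrable lborel (\<lambda>\<eta>. a l1 l2 * c * (indicator {0..\<delta>} \<eta> *\<^sub>R X l1 l2 \<eta>))" for l1 l2
    by (intro integrable_mult_right int)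
  have i2: "integrable lborel (\<lambda>\<eta>. \<Sum>l1\<in>{0..l2}. a l1 l2 * c * (indicator {0..\<delta>} \<eta> *\<^sub>R X l1 l2 \<eta>))" for l2
    by (rule Bochner_Integration.integrable_sum) (rule int2)
  have "nonlin_hat j a (free_evol j T (gL \<delta>)) (free_evol j T (gH N)) t' \<xi>
      = (\<Sum>l2\<in>{0..2*j}. \<Sum>l1\<in>{0..l2}. a l1 l2 * c * (\<integral>\<eta>. indicator {0..\<delta>} \<eta> *\<^sub>R X l1 l2 \<eta> \<partial>lborel))"
    unfolding nonlin_hat_def c_def by (simp only: h_eq)
  also have "\<dots> = (\<Sum>l2\<in>{0..2*j}. \<Sum>l1\<in>{0..l2}. (\<integral>\<eta>. a l1 l2 * c * (indicator {0..\<delta>} \<eta> *\<^sub>R X l1 l2 \<eta>) \<partial>lborel))"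
    by (simp only: integral_mult_right_zero)
  also have "\<dots> = (\<Sum>l2\<in>{0..2*j}. (\<integral>\<eta>. (\<Sum>l1\<in>{0..l2}. a l1 l2 * c * (indicator {0..\<delta>} \<eta> *\<^sub>R X l1 l2 \<eta>)) \<partial>lborel))"
    by (intro sum.cong refl Bochner_Integration.integral_sum[symmetric] int2)
  also have "\<dots> = (\<integral>\<eta>. (\<Sum>l2\<in>{0..2*j}. \<Sum>l1\<in>{0..l2}. a l1 l2 * c * (indicator {0..\<delta>} \<eta> *\<^sub>R X l1 l2 \<eta>)) \<partial>lborel)"
    by (intro Bochner_Integration.integral_sum[symmetric] i2)
  finally have nl: "nonlin_hat j a (free_evol j T (gL \<delta>)) (free_evol j T (gH N)) t' \<xi>
      = (\<integral>\<eta>. (\<Sum>l2\<in>{0..2*j}. \<Sum>l1\<in>{0..l2}. a l1 l2 * c * (indicator {0..\<delta>} \<eta> *\<^sub>R X l1 l2 \<eta>)) \<partial>lborel)" .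
  have pw: "disp j \<xi> (T - t') * (\<Sum>l2\<in>{0..2*j}. \<Sum>l1\<in>{0..l2}. a l1 l2 * c * (indicator {0..\<delta>} \<eta> *\<^sub>R X l1 l2 \<eta>))
      = indicator {0..\<delta>} \<eta> *\<^sub>R stuff t' \<xi> \<eta>" for \<eta>
  proof (cases "\<eta> \<in> {0..\<delta>}")
    case True
    then show ?thesis by (simp add: stuff_def Pm_def X_def c_def sum_distrib_left algebra_simps)
  next
    case False
    then show ?thesis by simp
  qed
  show ?thesis unfolding nl integral_mult_right_zero[symmetric] pw ..
qed

lemma K1: "1 \<le> K" using KJ j1 by simp

lemma stuff_cont: "continuous_on {0..\<delta>} (stuff t' \<xi>)"
  unfolding stuff_def disp_def Pm_def by (intro continuous_intros)

lemma stuff_int: "integrable lborel (\<lambda>\<eta>. indicator {0..\<delta>} \<eta> *\<^sub>R stuff t' \<xi> \<eta>)"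
  by (rule borel_integrable_compact[OF compact_Icc stuff_cont])

definition \<omega>0 :: "real \<Rightarrow> complex" where
  "\<omega>0 \<xi> = cnj (disp j \<xi> T) * (cnj (a 0 K * \<i> ^ K) / cmod (a 0 K))"

lemma norm_disp: "cmod (disp j x t) = 1"
  unfolding disp_def by (rule norm_exp_i_times)

lemma norm_\<omega>0: "cmod (\<omega>0 \<xi>) = 1"
  using aK by (simp add: \<omega>0_def norm_mult norm_divide norm_power norm_disp)

definition Lc :: real where "Lc = cmod (a 0 K) * N ^ K / (8 * pi)"

lemma stuff_Re:
  assumes t: "t' \<in> {0..T}" and xi: "\<xi> \<in> {N+\<delta>..N+1}" and eta: "\<eta> \<in> {0..\<delta>}"
  shows "Re (\<omega>0 \<xi> * stuff t' \<xi> \<eta>) \<ge> Lc"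
proof -
  obtain \<theta> where th: "\<bar>\<theta>\<bar> \<le> 1"
    and eq: "cnj (disp j \<xi> T) * disp j \<xi> (T - t') * disp j \<eta> t' * disp j (\<xi> - \<eta>) t' = exp (\<i> * complex_of_real \<theta>)"
    using phase[OF t eta xi] by blast
  define \<omega> where "\<omega> = cnj (a 0 K * \<i> ^ K) / cmod (a 0 K)"
  have "\<omega>0 \<xi> * stuff t' \<xi> \<eta> = complex_of_real (1 / (2 * pi)) * ((cnj (disp j \<xi> T) * disp j \<xi> (T - t') * disp j \<eta> t' * disp j (\<xi> - \<eta>) t') * \<omega> * Pm a j \<eta> (\<xi> - \<eta>))"
    unfolding \<omega>0_def stuff_def \<omega>_def by (simp only: ac_simps)
  also have "\<dots> = complex_of_real (1 / (2 * pi)) * (\<omega> * exp (\<i> * complex_of_real \<theta>) * Pm a j \<eta> (\<xi> - \<eta>))"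
    unfolding eq by (simp only: ac_simps)
  finally have e2: "Re (\<omega>0 \<xi> * stuff t' \<xi> \<eta>) = (1 / (2 * pi)) * Re (\<omega> * exp (\<i> * complex_of_real \<theta>) * Pm a j \<eta> (\<xi> - \<eta>))"
    by simp
  have e0: "0 \<le> \<eta>" "\<eta> \<le> \<delta>" using eta by auto
  have dle: "\<delta> \<le> 1" using d_le by simp
  have z0: "N \<le> \<xi> - \<eta>" "\<xi> - \<eta> \<le> N + 1" using xi eta by auto
  have "\<eta> * (\<xi> - \<eta>) ^ (2*j) \<le> \<delta> * (N+1) ^ (2*j)"
    using e0 z0 N1 by (intro mult_mono power_mono) auto
  then have small: "\<eta> * (\<xi> - \<eta>) ^ (2*j) \<le> 1" using d1 by linarith
  have "Re (\<omega> * exp (\<i> * complex_of_real \<theta>) * Pm a j \<eta> (\<xi> - \<eta>)) \<ge> cmod (a 0 K) * N ^ K / 4"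
    unfolding \<omega>_def
    by (rule P_lower[OF KJ(2) K1 amax aK e0(1) _ z0(1) N1 small NA th]) (use e0 dle in simp)
  then have "(1 / (2 * pi)) * Re (\<omega> * exp (\<i> * complex_of_real \<theta>) * Pm a j \<eta> (\<xi> - \<eta>)) \<ge> (1 / (2 * pi)) * (cmod (a 0 K) * N ^ K / 4)"
    by (intro mult_left_mono) auto
  then show ?thesis unfolding e2 Lc_def by simp
qed

definition Bd :: real where "Bd = (1 / (2 * pi)) * ((cmod (a 0 K) + Asum a j) * (N + 1) ^ K)"

lemma stuff_bound:
  assumes xi: "\<xi> \<in> {N+\<delta>..N+1}" and eta: "\<eta> \<in> {0..\<delta>}"
  shows "cmod (stuff t' \<xi> \<eta>) \<le> Bd"
proof -
  have e0: "0 \<le> \<eta>" "\<eta> \<le> \<delta>" using eta by auto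
  have dle: "\<delta> \<le> 1" using d_le by simp
  have z0: "N \<le> \<xi> - \<eta>" "\<xi> - \<eta> \<le> N + 1" using xi eta by auto
  have z1: "1 \<le> \<xi> - \<eta>" using z0 N1 by simp
  have "\<eta> * (\<xi> - \<eta>) ^ (2*j) \<le> \<delta> * (N+1) ^ (2*j)"
    using e0 z0 N1 by (intro mult_mono power_mono) auto
  then have small: "\<eta> * (\<xi> - \<eta>) ^ (2*j) \<le> 1" using d1 by linarith
  have R: "cmod (Pm a j \<eta> (\<xi> - \<eta>) - a 0 K * (\<i> * complex_of_real (\<xi> - \<eta>)) ^ K) \<le> Asum a j * (\<xi> - \<eta>) ^ (K - 1)"
    using P_remainder[of K j a \<eta> "\<xi> - \<eta>"] KJ K1 amax e0 dle z1 small by auto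
  have p1: "(\<xi> - \<eta>) ^ (K - 1) \<le> (N + 1) ^ K"
  proof -
    have "(\<xi> - \<eta>) ^ (K - 1) \<le> (\<xi> - \<eta>) ^ K" using z1 by (intro power_increasing) auto
    also have "\<dots> \<le> (N + 1) ^ K" using z0 z1 by (intro power_mono) auto
    finally show ?thesis .
  qed
  have p2: "(\<xi> - \<eta>) ^ K \<le> (N + 1) ^ K" using z0 z1 by (intro power_mono) auto
  have "cmod (Pm a j \<eta> (\<xi> - \<eta>)) \<le> cmod (a 0 K * (\<i> * complex_of_real (\<xi> - \<eta>)) ^ K) + Asum a j * (\<xi> - \<eta>) ^ (K - 1)"
    using R norm_triangle_ineq2[of "Pm a j \<eta> (\<xi> - \<eta>)" "a 0 K * (\<i> * complex_of_real (\<xi> - \<eta>)) ^ K"] by linarith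
  also have "cmod (a 0 K * (\<i> * complex_of_real (\<xi> - \<eta>)) ^ K) = cmod (a 0 K) * (\<xi> - \<eta>) ^ K"
    using z1 by (simp add: norm_mult norm_power del: of_real_diff)
  finally have "cmod (Pm a j \<eta> (\<xi> - \<eta>)) \<le> cmod (a 0 K) * (N + 1) ^ K + Asum a j * (N + 1) ^ K"
    using p1 p2 Asum_nonneg[of a j] mult_left_mono[OF p1, of "Asum a j"] mult_left_mono[OF p2, of "cmod (a 0 K)"] by simp
  then have P: "cmod (Pm a j \<eta> (\<xi> - \<eta>)) \<le> (cmod (a 0 K) + Asum a j) * (N + 1) ^ K"
    by (simp add: algebra_simps)
  have "cmod (stuff t' \<xi> \<eta>) = (1 / (2 * pi)) * cmod (Pm a j \<eta> (\<xi> - \<eta>))"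
    by (simp add: stuff_def norm_mult norm_divide norm_disp)
  also have "\<dots> \<le> Bd" unfolding Bd_def using P by (intro mult_left_mono) auto
  finally show ?thesis .
qed

abbreviation ff :: "real \<Rightarrow> real \<Rightarrow> complex" where
  "ff \<xi> t' \<equiv> disp j \<xi> (T - t') * nonlin_hat j a (free_evol j T (gL \<delta>)) (free_evol j T (gH N)) t' \<xi>"

lemma f_Re:
  assumes t: "t' \<in> {0..T}" and xi: "\<xi> \<in> {N+\<delta>..N+1}"
  shows "Re (\<omega>0 \<xi> * ff \<xi> t') \<ge> \<delta> * Lc"
proof -
  have "Re (\<omega>0 \<xi> * ff \<xi> t') = Re (\<integral>\<eta>. \<omega>0 \<xi> * (indicator {0..\<delta>} \<eta> *\<^sub>R stuff t' \<xi> \<eta>) \<partial>lborel)"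
    unfolding f_formula[OF t xi] integral_mult_right_zero ..
  also have "\<dots> = (\<integral>\<eta>. Re (\<omega>0 \<xi> * (indicator {0..\<delta>} \<eta> *\<^sub>R stuff t' \<xi> \<eta>)) \<partial>lborel)"
    by (rule integral_Re[symmetric]) (intro integrable_mult_right stuff_int)
  also have "\<dots> \<ge> (\<integral>\<eta>. indicator {0..\<delta>} \<eta> * Lc \<partial>lborel)"
  proof (rule integral_mono)
    show "integrable lborel (\<lambda>\<eta>. indicator {0..\<delta>} \<eta> * Lc)" by (rule integrable_ind_const)
    show "integrable lborel (\<lambda>\<eta>. Re (\<omega>0 \<xi> * (indicator {0..\<delta>} \<eta> *\<^sub>R stuff t' \<xi> \<eta>)))"
      by (intro integrable_Re integrable_mult_right stuff_int)
    fix \<eta> :: real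
    show "indicator {0..\<delta>} \<eta> * Lc \<le> Re (\<omega>0 \<xi> * (indicator {0..\<delta>} \<eta> *\<^sub>R stuff t' \<xi> \<eta>))"
      using stuff_Re[OF t xi, of \<eta>] by (cases "\<eta> \<in> {0..\<delta>}") auto
  qed
  also have "(\<integral>\<eta>. indicator {0..\<delta>} \<eta> * Lc \<partial>lborel) = \<delta> * Lc"
    using d0 by (subst integral_ind_const) auto
  finally show ?thesis .
qed

lemma f_norm:
  assumes t: "t' \<in> {0..T}" and xi: "\<xi> \<in> {N+\<delta>..N+1}"
  shows "cmod (ff \<xi> t') \<le> \<delta> * Bd"
proof -
  have "cmod (ff \<xi> t') \<le> (\<integral>\<eta>. norm (indicator {0..\<delta>} \<eta> *\<^sub>R stuff t' \<xi> \<eta>) \<partial>lborel)"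
    unfolding f_formula[OF t xi] by (rule integral_norm_bound)
  also have "\<dots> \<le> (\<integral>\<eta>. indicator {0..\<delta>} \<eta> * Bd \<partial>lborel)"
  proof (rule integral_mono)
    show "integrable lborel (\<lambda>\<eta>. indicator {0..\<delta>} \<eta> * Bd)" by (rule integrable_ind_const)
    show "integrable lborel (\<lambda>\<eta>. norm (indicator {0..\<delta>} \<eta> *\<^sub>R stuff t' \<xi> \<eta>))"
      by (intro integrable_norm stuff_int)
    fix \<eta> :: real
    show "norm (indicator {0..\<delta>} \<eta> *\<^sub>R stuff t' \<xi> \<eta>) \<le> indicator {0..\<delta>} \<eta> * Bd"
      using stuff_bound[OF xi, of \<eta> t'] by (cases "\<eta> \<in> {0..\<delta>}") auto
  qed
  also have "(\<integral>\<eta>. indicator {0..\<delta>} \<eta> * Bd \<partial>lborel) = \<delta> * Bd"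
    using d0 by (subst integral_ind_const) auto
  finally show ?thesis .
qed

lemma f_int:
  assumes xi: "\<xi> \<in> {N+\<delta>..N+1}"
  shows "integrable lborel (\<lambda>t'. indicator {0..T} t' *\<^sub>R ff \<xi> t')"
proof (rule integrableI_bounded_set_indicator[where B="\<delta> * Bd"])
  show "{0..T} \<in> sets lborel" by simp
  show "ff \<xi> \<in> borel_measurable lborel"
    unfolding nonlin_hat_def free_evol_def disp_def gL_def gH_def by measurable
  show "emeasure lborel {0..T} < \<infinity>" using emeasure_compact_finite[OF compact_Icc[of 0 T]] by simp
  show "AE x in lborel. x \<in> {0..T} \<longrightarrow> norm (ff \<xi> x) \<le> \<delta> * Bd"
    using f_norm[OF _ xi] by auto
qed

lemma D_lower:
  assumes xi: "\<xi> \<in> {N+\<delta>..N+1}"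
  shows "cmod (duhamel j T a (free_evol j T (gL \<delta>)) (free_evol j T (gH N)) T \<xi>) \<ge> T * (\<delta> * Lc)"
proof -
  define D where "D = duhamel j T a (free_evol j T (gL \<delta>)) (free_evol j T (gH N)) T \<xi>"
  have le: "0 \<le> T" using T0 by simp
  have "D = interval_lebesgue_integral lborel (ereal 0) (ereal T) (ff \<xi>)"
    using T0 unfolding D_def duhamel_def by simp
  also have "\<dots> = (\<integral>t'. indicator {0..T} t' *\<^sub>R ff \<xi> t' \<partial>lborel)"
    unfolding interval_integral_Icc[OF le] set_lebesgue_integral_def ..
  finally have Deq: "D = (\<integral>t'. indicator {0..T} t' *\<^sub>R ff \<xi> t' \<partial>lborel)" .
  have "Re (\<omega>0 \<xi> * D) = Re (\<integral>t'. \<omega>0 \<xi> * (indicator {0..T} t' *\<^sub>R ff \<xi> t') \<partial>lborel)"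
    unfolding Deq integral_mult_right_zero ..
  also have "\<dots> = (\<integral>t'. Re (\<omega>0 \<xi> * (indicator {0..T} t' *\<^sub>R ff \<xi> t')) \<partial>lborel)"
    by (rule integral_Re[symmetric]) (intro integrable_mult_right f_int xi)
  also have "\<dots> \<ge> (\<integral>t'. indicator {0..T} t' * (\<delta> * Lc) \<partial>lborel)"
  proof (rule integral_mono)
    show "integrable lborel (\<lambda>t'. indicator {0..T} t' * (\<delta> * Lc))" by (rule integrable_ind_const)
    show "integrable lborel (\<lambda>t'. Re (\<omega>0 \<xi> * (indicator {0..T} t' *\<^sub>R ff \<xi> t')))"
      by (intro integrable_Re integrable_mult_right f_int xi)
    fix t' :: real
    show "indicator {0..T} t' * (\<delta> * Lc) \<le> Re (\<omega>0 \<xi> * (indicator {0..T} t' *\<^sub>R ff \<xi> t'))"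
      using f_Re[OF _ xi, of t'] by (cases "t' \<in> {0..T}") auto
  qed
  also have "(\<integral>t'. indicator {0..T} t' * (\<delta> * Lc) \<partial>lborel) = T * (\<delta> * Lc)"
    using T0 by (subst integral_ind_const) auto
  finally have "T * (\<delta> * Lc) \<le> Re (\<omega>0 \<xi> * D)" .
  also have "\<dots> \<le> cmod (\<omega>0 \<xi> * D)" by (rule complex_Re_le_cmod)
  also have "\<dots> = cmod D" by (simp add: norm_mult norm_\<omega>0)
  finally show ?thesis unfolding D_def .
qed

lemma Lc_nonneg: "Lc \<ge> 0" unfolding Lc_def using N1 by simp

lemma Hs_D_lower:
  assumes inH: "in_Hs s (duhamel j T a (free_evol j T (gL \<delta>)) (free_evol j T (gH N)) T)"
  shows "(Hs_norm s (duhamel j T a (free_evol j T (gL \<delta>)) (free_evol j T (gH N)) T))\<^sup>2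
     \<ge> (1 - \<delta>) * ((1 + N\<^sup>2) powr s * 4 powr (-\<bar>s\<bar>) * (T * (\<delta> * Lc))\<^sup>2)"
proof -
  define D where "D = duhamel j T a (free_evol j T (gL \<delta>)) (free_evol j T (gH N)) T"
  define C where "C = (1 + N\<^sup>2) powr s * 4 powr (-\<bar>s\<bar>) * (T * (\<delta> * Lc))\<^sup>2"
  have iD: "integrable lborel (\<lambda>\<xi>. (1 + \<xi>\<^sup>2) powr s * (cmod (D \<xi>))\<^sup>2)"
    using inH by (simp add: in_Hs_def D_def)
  have dle: "\<delta> \<le> 1/4" by (rule d_le)
  have "(\<integral>\<xi>. indicator {N+\<delta>..N+1} \<xi> * C \<partial>lborel) \<le> (\<integral>\<xi>. (1 + \<xi>\<^sup>2) powr s * (cmod (D \<xi>))\<^sup>2 \<partial>lborel)"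
  proof (rule integral_mono[OF integrable_ind_const iD])
    fix \<xi> :: real
    show "indicator {N+\<delta>..N+1} \<xi> * C \<le> (1 + \<xi>\<^sup>2) powr s * (cmod (D \<xi>))\<^sup>2"
    proof (cases "\<xi> \<in> {N+\<delta>..N+1}")
      case True
      have w: "(1 + \<xi>\<^sup>2) powr s \<ge> (1 + N\<^sup>2) powr s * 4 powr (-\<bar>s\<bar>)"
        using weight_bounds(2)[of N \<xi> s] True N1 d0 by auto
      have "T * (\<delta> * Lc) \<le> cmod (D \<xi>)" using D_lower[OF True] by (simp add: D_def)
      moreover have "0 \<le> T * (\<delta> * Lc)" using T0 d0 Lc_nonneg by simp
      ultimately have "(T * (\<delta> * Lc))\<^sup>2 \<le> (cmod (D \<xi>))\<^sup>2" by (intro power_mono) auto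
      then have "C \<le> (1 + \<xi>\<^sup>2) powr s * (cmod (D \<xi>))\<^sup>2"
        unfolding C_def using w by (intro mult_mono) auto
      then show ?thesis using True by simp
    qed simp
  qed
  also have "(\<integral>\<xi>. indicator {N+\<delta>..N+1} \<xi> * C \<partial>lborel) = (1 - \<delta>) * C"
    using dle by (subst integral_ind_const) auto
  finally show ?thesis unfolding Hs_norm_sq D_def C_def .
qed

end


theorem theorem3:
  fixes j :: nat and s T :: real and a :: "nat \<Rightarrow> nat \<Rightarrow> complex"
  assumes "j \<ge> 1" and "T > 0"
    and "\<exists>k. j < k \<and> k \<le> 2 * j \<and> a 0 k \<noteq> 0"
  shows "\<not> (\<exists>X N. seminormed_fun_space X N \<and>
     (\<exists>C1. \<forall>u\<in>X. in_C_Hs s T u \<and> C_Hs_norm s T u \<le> C1 * N u) \<and>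
     (\<exists>C2. \<forall>g. in_Hs s g \<longrightarrow>
          free_evol j T g \<in> X \<and> N (free_evol j T g) \<le> C2 * Hs_norm s g) \<and>
     (\<exists>C3. \<forall>u\<in>X. \<forall>v\<in>X.
          duhamel j T a u v \<in> X \<and> N (duhamel j T a u v) \<le> C3 * N u * N v))"
proof
  assume "\<exists>X N. seminormed_fun_space X N \<and>
     (\<exists>C1. \<forall>u\<in>X. in_C_Hs s T u \<and> C_Hs_norm s T u \<le> C1 * N u) \<and>
     (\<exists>C2. \<forall>g. in_Hs s g \<longrightarrow>
          free_evol j T g \<in> X \<and> N (free_evol j T g) \<le> C2 * Hs_norm s g) \<and>
     (\<exists>C3. \<forall>u\<in>X. \<forall>v\<in>X.
          duhamel j T a u v \<in> X \<and> N (duhamel j T a u v) \<le> C3 * N u * N v)"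
  then obtain X Nm C1 C2 C3 where sp: "seminormed_fun_space X Nm"
    and c1: "\<forall>u\<in>X. in_C_Hs s T u \<and> C_Hs_norm s T u \<le> C1 * Nm u"
    and c2: "\<forall>g. in_Hs s g \<longrightarrow> free_evol j T g \<in> X \<and> Nm (free_evol j T g) \<le> C2 * Hs_norm s g"
    and c3: "\<forall>u\<in>X. \<forall>v\<in>X. duhamel j T a u v \<in> X \<and> Nm (duhamel j T a u v) \<le> C3 * Nm u * Nm v"
    by blast
  have j1: "1 \<le> j" and T0: "0 < T" using assms by auto
  have Nm0: "\<And>u. u \<in> X \<Longrightarrow> Nm u \<ge> 0" using sp by (simp add: seminormed_fun_space_def)
  define S where "S = {k. j < k \<and> k \<le> 2*j \<and> a 0 k \<noteq> 0}"
  have finS: "finite S" unfolding S_def by (rule finite_subset[of _ "{..2*j}"]) auto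
  have neS: "S \<noteq> {}" using assms(3) by (auto simp: S_def)
  define K where "K = Max S"
  have KS: "K \<in> S" unfolding K_def using finS neS by (rule Max_in)
  have KJ: "j < K" "K \<le> 2*j" and aK: "a 0 K \<noteq> 0" using KS by (auto simp: S_def)
  have amax: "\<forall>l2. K < l2 \<and> l2 \<le> 2*j \<longrightarrow> a 0 l2 = 0"
  proof (intro allI impI)
    fix l2 assume l2: "K < l2 \<and> l2 \<le> 2*j"
    show "a 0 l2 = 0"
    proof (rule ccontr)
      assume "a 0 l2 \<noteq> 0"
      then have "l2 \<in> S" using l2 KJ by (auto simp: S_def)
      then have "l2 \<le> K" unfolding K_def by (rule Max_ge[OF finS])
      then show False using l2 by simp
    qed
  qed
  define \<alpha> where "\<alpha> = cmod (a 0 K)"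
  have \<alpha>0: "\<alpha> > 0" using aK by (simp add: \<alpha>_def)
  define A where "A = Asum a j"
  define E where "E = T * (2*j+2) + 1"
  have E1: "E \<ge> 1" using T0 by (simp add: E_def)
  define P where "P = (4::real) powr \<bar>s\<bar>"
  have P0: "P > 0" by (simp add: P_def)
  define M where "M = max C1 0 * max C3 0 * (max C2 0)\<^sup>2"
  define \<kappa> where "\<kappa> = (3/4) * T\<^sup>2 * \<alpha>\<^sup>2 / (64 * pi\<^sup>2 * E * 4 ^ j)"
  have \<kappa>0: "\<kappa> > 0" unfolding \<kappa>_def using T0 \<alpha>0 E1 by (intro divide_pos_pos mult_pos_pos) auto
  define Q where "Q = M\<^sup>2 * P ^ 3 / \<kappa>"
  define N where "N = max (max 1 (4 * A / \<alpha>)) (Q + 1)"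
  have N1: "1 \<le> N" and NQ: "Q + 1 \<le> N" and NA': "4 * A / \<alpha> \<le> N" by (auto simp: N_def)
  have NA: "4 * Asum a j \<le> cmod (a 0 K) * N"
    using NA' \<alpha>0 by (simp add: A_def \<alpha>_def pos_divide_le_eq mult.commute)
  define \<delta> where "\<delta> = 1 / (E * (N+1)^(2*j))"
  have Np: "(N+1)^(2*j) \<ge> 1" using N1 by simp
  have d0: "0 < \<delta>" unfolding \<delta>_def using E1 Np by simp
  have dE: "\<delta> * (N+1)^(2*j) = 1 / E" unfolding \<delta>_def using Np N1 by simp
  have d1: "\<delta> * (N+1)^(2*j) \<le> 1" using dE E1 by simp
  have dT: "T * (2*j+2) * \<delta> * (N+1)^(2*j) \<le> 1"
  proof -
    have "T * (2*j+2) * \<delta> * (N+1)^(2*j) = T * (2*j+2) / E"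
      using dE by (simp add: mult.assoc)
    also have "\<dots> \<le> 1" using E1 by (simp add: E_def)
    finally show ?thesis .
  qed
  have dle: "\<delta> \<le> 1/4" by (rule d_le[OF j1 T0 KJ aK amax N1 NA d0 d1 dT])
  have gLH: "in_Hs s (gL \<delta>)" and gLn: "(Hs_norm s (gL \<delta>))\<^sup>2 \<le> \<delta> * P"
    using ind_Hs[of 0 \<delta> s] d0 dle by (auto simp: gL_def[abs_def] P_def)
  have gHH: "in_Hs s (gH N)" and gHn: "(Hs_norm s (gH N))\<^sup>2 \<le> (1 + N\<^sup>2) powr s * P"
    using ind_Hs[of N "N+1" s] N1 by (auto simp: gH_def[abs_def] P_def)
  define wL where "wL = free_evol j T (gL \<delta>)"
  define wH where "wH = free_evol j T (gH N)"
  define D where "D = duhamel j T a wL wH"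
  have wLX: "wL \<in> X" and wLn: "Nm wL \<le> C2 * Hs_norm s (gL \<delta>)" using c2 gLH by (auto simp: wL_def)
  have wHX: "wH \<in> X" and wHn: "Nm wH \<le> C2 * Hs_norm s (gH N)" using c2 gHH by (auto simp: wH_def)
  have DX: "D \<in> X" and Dn: "Nm D \<le> C3 * Nm wL * Nm wH" using c3 wLX wHX by (auto simp: D_def)
  have DC: "in_C_Hs s T D" and DCn: "C_Hs_norm s T D \<le> C1 * Nm D" using c1 DX by auto
  have TT: "T \<in> {-T..T}" using T0 by simp
  have DTH: "in_Hs s (D T)" using DC TT by (simp add: in_C_Hs_def)
  have "Hs_norm s (D T) \<le> C_Hs_norm s T D" by (rule C_Hs_lower[OF T0 DC TT])
  have hL0: "Hs_norm s (gL \<delta>) \<ge> 0" and hH0: "Hs_norm s (gH N) \<ge> 0" by (rule Hs_norm_nonneg)+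
  have nL0: "Nm wL \<ge> 0" and nH0: "Nm wH \<ge> 0" and nD0: "Nm D \<ge> 0" using Nm0 wLX wHX DX by auto
  have u1: "Nm wL \<le> max C2 0 * Hs_norm s (gL \<delta>)"
    using wLn hL0 by (smt (verit) mult_right_mono)
  have u2: "Nm wH \<le> max C2 0 * Hs_norm s (gH N)"
    using wHn hH0 by (smt (verit) mult_right_mono)
  have u3: "Nm D \<le> max C3 0 * (Nm wL * Nm wH)"
    using Dn nL0 nH0 by (smt (verit) mult_nonneg_nonneg mult_right_mono mult.assoc)
  have u4: "C_Hs_norm s T D \<le> max C1 0 * Nm D"
    using DCn nD0 by (smt (verit) mult_right_mono)
  have "Nm wL * Nm wH \<le> (max C2 0 * Hs_norm s (gL \<delta>)) * (max C2 0 * Hs_norm s (gH N))"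
    using u1 u2 nL0 nH0 by (intro mult_mono) auto
  then have "Nm D \<le> max C3 0 * ((max C2 0 * Hs_norm s (gL \<delta>)) * (max C2 0 * Hs_norm s (gH N)))"
    using u3 by (smt (verit) mult_left_mono max.cobounded2)
  then have "C_Hs_norm s T D \<le> max C1 0 * (max C3 0 * ((max C2 0 * Hs_norm s (gL \<delta>)) * (max C2 0 * Hs_norm s (gH N))))"
    using u4 by (smt (verit) mult_left_mono max.cobounded2)
  also have "\<dots> = M * (Hs_norm s (gL \<delta>) * Hs_norm s (gH N))"
    by (simp add: M_def power2_eq_square algebra_simps)
  finally have up: "Hs_norm s (D T) \<le> M * (Hs_norm s (gL \<delta>) * Hs_norm s (gH N))"
    using \<open>Hs_norm s (D T) \<le> C_Hs_norm s T D\<close> by linarith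
  have M0: "M \<ge> 0" by (simp add: M_def)
  define W where "W = (1 + N\<^sup>2) powr s"
  have W0: "W > 0" using add_pos_nonneg[of 1 "N\<^sup>2"] by (simp add: W_def)
  have up2: "(Hs_norm s (D T))\<^sup>2 \<le> M\<^sup>2 * ((\<delta> * P) * (W * P))"
  proof -
    have "(Hs_norm s (D T))\<^sup>2 \<le> (M * (Hs_norm s (gL \<delta>) * Hs_norm s (gH N)))\<^sup>2"
      using up Hs_norm_nonneg[of s "D T"] by (intro power_mono) auto
    also have "\<dots> = M\<^sup>2 * ((Hs_norm s (gL \<delta>))\<^sup>2 * (Hs_norm s (gH N))\<^sup>2)"
      by (simp add: power_mult_distrib)
    also have "\<dots> \<le> M\<^sup>2 * ((\<delta> * P) * (W * P))"
      using gLn gHn d0 P0 by (intro mult_left_mono mult_mono) (auto simp: W_def)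
    finally show ?thesis .
  qed
  have lo: "(Hs_norm s (D T))\<^sup>2 \<ge> (1 - \<delta>) * (W * 4 powr (-\<bar>s\<bar>) * (T * (\<delta> * Lc a K N))\<^sup>2)"
    using Hs_D_lower[OF j1 T0 KJ aK amax N1 NA d0 d1 dT] DTH unfolding D_def wL_def wH_def W_def by blast
  define L where "L = Lc a K N"
  have Ldef: "L = \<alpha> * N ^ K / (8 * pi)" by (simp add: L_def Lc_def[OF j1 T0 KJ aK amax N1 NA d0 d1 dT] \<alpha>_def)
  have pm: "4 powr (-\<bar>s\<bar>) = 1 / P" by (simp add: P_def powr_minus_divide)
  have Hpos: "0 \<le> W / P * (T * (\<delta> * L))\<^sup>2" using W0 P0 by simp
  have s1: "(3/4) * (W / P * (T * (\<delta> * L))\<^sup>2) \<le> M\<^sup>2 * ((\<delta> * P) * (W * P))"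
  proof -
    have "(3/4) * (W / P * (T * (\<delta> * L))\<^sup>2) \<le> (1 - \<delta>) * (W / P * (T * (\<delta> * L))\<^sup>2)"
      using dle Hpos by (intro mult_right_mono) auto
    also have "\<dots> \<le> (Hs_norm s (D T))\<^sup>2" using lo by (simp add: pm L_def)
    finally show ?thesis using up2 by linarith
  qed
  have s1l: "(3/4) * (W / P * (T * (\<delta> * L))\<^sup>2) = (W * \<delta> / P) * ((3/4) * T\<^sup>2 * (\<delta> * L\<^sup>2))"
    by (simp add: power2_eq_square field_simps)
  have s1r: "M\<^sup>2 * ((\<delta> * P) * (W * P)) = (W * \<delta> / P) * (M\<^sup>2 * P ^ 3)"
    using P0 by (simp add: power2_eq_square power3_eq_cube field_simps)
  have fpos: "W * \<delta> / P > 0" using W0 d0 P0 by simp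
  have s2: "(3/4) * T\<^sup>2 * (\<delta> * L\<^sup>2) \<le> M\<^sup>2 * P ^ 3"
    using s1 unfolding s1l s1r by (rule mult_left_le_imp_le[OF _ fpos])
  have N0: "N > 0" using N1 by simp
  have b1: "(N+1)^(2*j) \<le> 4 ^ j * N ^ (2*j)"
  proof -
    have "(N+1)^(2*j) \<le> (2*N)^(2*j)" using N1 by (intro power_mono) auto
    also have "\<dots> = 4 ^ j * N ^ (2*j)" by (simp add: power_mult_distrib power_mult)
    finally show ?thesis .
  qed
  have b2: "N ^ (2*j) * N\<^sup>2 \<le> N ^ (2*K)"
  proof -
    have "N ^ (2*j) * N\<^sup>2 = N ^ (2*j+2)" by (simp only: power_add)
    also have "\<dots> \<le> N ^ (2*K)" using N1 KJ by (intro power_increasing) auto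
    finally show ?thesis .
  qed
  have s3: "\<alpha>\<^sup>2 * N\<^sup>2 / (64 * pi\<^sup>2 * E * 4 ^ j) \<le> \<delta> * L\<^sup>2"
  proof -
    have eqL: "\<delta> * L\<^sup>2 = \<alpha>\<^sup>2 * N ^ (2*K) / (64 * pi\<^sup>2 * E * (N+1)^(2*j))"
      unfolding Ldef \<delta>_def by (simp add: power2_eq_square power_mult power_mult_distrib field_simps)
    have "\<alpha>\<^sup>2 * N\<^sup>2 / (64 * pi\<^sup>2 * E * 4 ^ j) = \<alpha>\<^sup>2 * (N ^ (2*j) * N\<^sup>2) / (64 * pi\<^sup>2 * E * (4 ^ j * N ^ (2*j)))"
      using N0 by (simp add: field_simps)
    also have "\<dots> \<le> \<alpha>\<^sup>2 * N ^ (2*K) / (64 * pi\<^sup>2 * E * (N+1)^(2*j))"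
    proof (rule frac_le)
      show "0 \<le> \<alpha>\<^sup>2 * N ^ (2*K)" using N0 by simp
      show "\<alpha>\<^sup>2 * (N ^ (2*j) * N\<^sup>2) \<le> \<alpha>\<^sup>2 * N ^ (2*K)" using b2 by (intro mult_left_mono) auto
      show "0 < 64 * pi\<^sup>2 * E * (N+1)^(2*j)" using E1 N0 by simp
      show "64 * pi\<^sup>2 * E * (N+1)^(2*j) \<le> 64 * pi\<^sup>2 * E * (4 ^ j * N ^ (2*j))"
        using b1 E1 by (intro mult_left_mono) auto
    qed
    finally show ?thesis unfolding eqL .
  qed
  have "\<kappa> * N\<^sup>2 = (3/4) * T\<^sup>2 * (\<alpha>\<^sup>2 * N\<^sup>2 / (64 * pi\<^sup>2 * E * 4 ^ j))"
    by (simp add: \<kappa>_def field_simps)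
  also have "\<dots> \<le> (3/4) * T\<^sup>2 * (\<delta> * L\<^sup>2)" using s3 by (intro mult_left_mono) auto
  also have "\<dots> \<le> M\<^sup>2 * P ^ 3" by (rule s2)
  finally have "\<kappa> * N\<^sup>2 \<le> M\<^sup>2 * P ^ 3" .
  then have "N\<^sup>2 \<le> Q" unfolding Q_def using \<kappa>0 by (simp add: pos_le_divide_eq mult.commute)
  moreover have "N \<le> N\<^sup>2" using N1 by (simp add: power2_eq_square)
  ultimately show False using NQ by linarith
qed

end
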